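(* Let $G$ be a weighted graph, $s\in[0,1]^V$ a vector of innate opinions, $z=(I+L)^{-1}s$ the equilibrium opinions, and $D=D(z)$. Let $k\in\mathbb{N}$ and let $s'\in[0,1]^V$ satisfy $\|s'-s\|_0\le k$. Let $z'=(I+L)^{-1}s'$ and $D'=D(z')$. Then $D'\le D+8\,d_{\max}\,k$, where $d_{\max}:=\max_{v\in V}\sum_{u\in V}w_{v,u}$ is the weighted maximum degree.
   Context: $G=(V,E,w)$ is a weighted undirected graph on $n=|V|$ vertices, with weights $w_{u,v}\in(0,1]$ for $(u,v)\in E$ and $w_{u,v}=0$ otherwise (and $w_{v,v}=0$). $L=\mathrm{Diag}(d)-A$ is the weighted Laplacian, where $A_{u,v}=w_{u,v}$ and $d_v=\sum_u w_{v,u}$. Disagreement of a vector $z\in\mathbb{R}^V$ is $D(z)=\sum_{(u,v)\in E} w_{u,v}(z_u-z_v)^2$ (each edge counted once). $\|x\|_0$ denotes the number of nonzero coordinates of $x$. *)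

theory Defs
  imports "HOL-Analysis.Analysis"
begin

text \<open>Weighted undirected graph on the finite vertex type 'n, given by its symmetric
  weight matrix W (W$u$v = w_{u,v}); edges are the pairs with nonzero weight.\<close>

definition weighted_graph :: "real^'n^'n \<Rightarrow> bool" where
  "weighted_graph W \<longleftrightarrow>
     (\<forall>u v. W$u$v = W$v$u) \<and> (\<forall>v. W$v$v = 0) \<and> (\<forall>u v. 0 \<le> W$u$v \<and> W$u$v \<le> 1)"

definition wdeg :: "real^'n^'n \<Rightarrow> 'n \<Rightarrow> real" where
  "wdeg W v = (\<Sum>u\<in>UNIV. W$v$u)"

definition laplacian :: "real^'n^'n \<Rightarrow> real^'n^'n" where
  "laplacian W = (\<chi> u v. (if u = v then wdeg W u else 0) - W$u$v)"

text \<open>Disagreement: sum over edges, each counted once (= half the ordered double sum).\<close>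
definition disagreement :: "real^'n^'n \<Rightarrow> real^'n \<Rightarrow> real" where
  "disagreement W z = (\<Sum>u\<in>UNIV. \<Sum>v\<in>UNIV. W$u$v * (z$u - z$v)^2) / 2"

definition equilibrium :: "real^'n^'n \<Rightarrow> real^'n \<Rightarrow> real^'n" where
  "equilibrium W s = matrix_inv (mat 1 + laplacian W) *v s"

definition max_wdeg :: "real^'n^'n \<Rightarrow> real" where
  "max_wdeg W = Max (range (wdeg W))"

definition l0_norm :: "real^'n \<Rightarrow> nat" where
  "l0_norm x = card {v. x$v \<noteq> 0}"

end

theory Submission imports Defs begin

definition lapv :: "real^'n^'n \<Rightarrow> real^'n \<Rightarrow> 'n \<Rightarrow> real" where
  "lapv W x v = (\<Sum>u\<in>UNIV. W$v$u * (x$v - x$u))"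

definition bf :: "real^'n^'n \<Rightarrow> real^'n \<Rightarrow> real^'n \<Rightarrow> real" where
  "bf W a b = (\<Sum>u\<in>UNIV. \<Sum>v\<in>UNIV. W$u$v * (a$u - a$v) * (b$u - b$v)) / 2"

lemma Mv: "((mat 1 + laplacian W) *v x)$v = x$v + lapv W x v"
proof -
  have "((mat 1 + laplacian W) *v x)$v = (\<Sum>j\<in>UNIV. ((if v = j then 1 + wdeg W v else 0) - W$v$j) * x$j)"
    by (auto simp: matrix_vector_mult_def laplacian_def mat_def intro!: sum.cong)
  also have "\<dots> = (\<Sum>j\<in>UNIV. (if v = j then (1 + wdeg W v) * x$j else 0) - W$v$j * x$j)"
    by (intro sum.cong) (auto simp: algebra_simps)
  also have "\<dots> = (\<Sum>j\<in>UNIV. (if v = j then (1 + wdeg W v) * x$j else 0)) - (\<Sum>j\<in>UNIV. W$v$j * x$j)"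
    by (simp add: sum_subtractf)
  also have "\<dots> = (1 + wdeg W v) * x$v - (\<Sum>j\<in>UNIV. W$v$j * x$j)"
    by simp
  also have "\<dots> = x$v + lapv W x v"
    by (simp add: lapv_def wdeg_def right_diff_distrib sum_subtractf sum_distrib_right sum_distrib_left algebra_simps)
  finally show ?thesis .
qed

lemma maxp:
  assumes wg: "weighted_graph W" and eq: "(mat 1 + laplacian W) *v x = b"
    and bc: "\<forall>v. b$v \<le> c"
  shows "x$v \<le> c"
proof -
  have "Max (range (\<lambda>u. x$u)) \<in> range (\<lambda>u. x$u)" by (rule Max_in) auto
  then obtain m where mx: "Max (range (\<lambda>u. x$u)) = x$m" by (rule rangeE)
  have m: "\<forall>u. x$u \<le> x$m"
  proof
    fix u show "x$u \<le> x$m" unfolding mx[symmetric] by (rule Max_ge) auto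
  qed
  have "lapv W x m \<ge> 0" unfolding lapv_def
    using wg m by (intro sum_nonneg) (auto simp: weighted_graph_def)
  moreover have "x$m + lapv W x m = b$m" using Mv[of W x m] eq by simp
  ultimately show ?thesis using bc[rule_format, of m] m[rule_format, of v] by linarith
qed

lemma minp:
  assumes wg: "weighted_graph W" and eq: "(mat 1 + laplacian W) *v x = b"
    and bc: "\<forall>v. c \<le> b$v"
  shows "c \<le> x$v"
proof -
  have "(mat 1 + laplacian W) *v (0 - x) = 0 - b" using eq
    by (subst matrix_vector_mult_diff_distrib) (simp add: eq)
  hence "(0 - x)$v \<le> 0 - c" by (rule maxp[OF wg]) (use bc in auto)
  thus ?thesis by simp
qed

lemma Minv:
  assumes wg: "weighted_graph W"
  shows "(mat 1 + laplacian W) *v (matrix_inv (mat 1 + laplacian W) *v s) = s"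
proof -
  let ?M = "mat 1 + laplacian W"
  have "\<forall>x. ?M *v x = 0 \<longrightarrow> x = 0"
  proof (intro allI impI)
    fix x assume h: "?M *v x = 0"
    have "x$v = 0" for v using maxp[OF wg h, of 0 v] minp[OF wg h, of 0 v] by auto
    thus "x = 0" by (simp add: vec_eq_iff)
  qed
  hence "invertible ?M" by (simp add: invertible_left_inverse matrix_left_invertible_ker)
  hence "?M ** matrix_inv ?M = mat 1"
    unfolding matrix_inv_def invertible_def by (rule someI_ex[THEN conjunct1])
  thus ?thesis by (simp add: matrix_vector_mul_assoc)
qed

lemma bf_lap:
  assumes sym: "\<forall>u v. W$u$v = W$v$u"
  shows "bf W a b = (\<Sum>u\<in>UNIV. a$u * lapv W b u)"
proof -
  define S1 where "S1 = (\<Sum>u\<in>UNIV. \<Sum>v\<in>UNIV. W$u$v * (a$u * (b$u - b$v)))"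
  define S2 where "S2 = (\<Sum>u\<in>UNIV. \<Sum>v\<in>UNIV. W$u$v * (a$v * (b$v - b$u)))"
  have "S2 = (\<Sum>v\<in>UNIV. \<Sum>u\<in>UNIV. W$u$v * (a$v * (b$v - b$u)))"
    unfolding S2_def by (rule sum.swap)
  also have "\<dots> = S1" unfolding S1_def using sym by simp
  finally have e: "S2 = S1" .
  have "2 * bf W a b = S1 + S2"
    unfolding bf_def S1_def S2_def by (simp add: sum.distrib[symmetric] algebra_simps)
  moreover have "S1 = (\<Sum>u\<in>UNIV. a$u * lapv W b u)"
    unfolding S1_def lapv_def by (simp add: sum_distrib_left algebra_simps)
  ultimately show ?thesis using e by simp
qed

lemma bf_comm: "bf W a b = bf W b a"
  unfolding bf_def by (simp add: algebra_simps)

lemma D_diff: "disagreement W z' - disagreement W z = bf W (z' - z) (z' + z)"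
proof -
  have "disagreement W z' - disagreement W z =
     (\<Sum>u\<in>UNIV. \<Sum>v\<in>UNIV. W$u$v * (z'$u - z'$v)^2 - W$u$v * (z$u - z$v)^2) / 2"
    by (simp add: disagreement_def sum_subtractf diff_divide_distrib)
  also have "\<dots> = bf W (z' - z) (z' + z)"
    unfolding bf_def by (intro arg_cong[where f="\<lambda>t. t/2"] sum.cong refl)
       (simp add: power2_eq_square algebra_simps)
  finally show ?thesis .
qed

lemma lapv_add: "lapv W (x + y) v = lapv W x v + lapv W y v"
  unfolding lapv_def by (simp add: sum.distrib[symmetric] algebra_simps)

lemma main:
  fixes W :: "real^'n^'n" and s s' :: "real^'n" and k :: nat
  assumes wg: "weighted_graph W"
    and s: "\<forall>v. 0 \<le> s$v \<and> s$v \<le> 1"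
    and s': "\<forall>v. 0 \<le> s'$v \<and> s'$v \<le> 1"
    and l0: "l0_norm (s' - s) \<le> k"
  shows "disagreement W (equilibrium W s')
           \<le> disagreement W (equilibrium W s) + 8 * max_wdeg W * real k"
proof -
  let ?M = "mat 1 + laplacian W"
  define z where "z = equilibrium W s"
  define z' where "z' = equilibrium W s'"
  have sym: "\<forall>u v. W$u$v = W$v$u" and Wnn: "\<And>u v. 0 \<le> W$u$v"
    using wg by (auto simp: weighted_graph_def)
  have Mz: "?M *v z = s" unfolding z_def equilibrium_def by (rule Minv[OF wg])
  have Mz': "?M *v z' = s'" unfolding z'_def equilibrium_def by (rule Minv[OF wg])
  have zb: "0 \<le> z$v \<and> z$v \<le> 1" for v
    using maxp[OF wg Mz, of 1 v] minp[OF wg Mz, of 0 v] s by auto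
  have z'b: "0 \<le> z'$v \<and> z'$v \<le> 1" for v
    using maxp[OF wg Mz', of 1 v] minp[OF wg Mz', of 0 v] s' by auto
  define y where "y = matrix_inv ?M *v (z' + z)"
  have My: "?M *v y = z' + z" unfolding y_def by (rule Minv[OF wg])
  have yb: "0 \<le> y$v \<and> y$v \<le> 2" for v
  proof -
    have h: "(z' + z)$v \<le> 2 \<and> 0 \<le> (z' + z)$v" for v
      using zb[of v] z'b[of v] by simp
    hence "\<forall>v. (z' + z)$v \<le> 2" "\<forall>v. 0 \<le> (z' + z)$v" by auto
    thus ?thesis using maxp[OF wg My, of 2 v] minp[OF wg My, of 0 v] by auto
  qed
  define e where "e = z' - z"
  define d where "d = s' - s"
  have Me: "?M *v e = d" unfolding e_def d_def
    by (simp add: matrix_vector_mult_diff_distrib Mz Mz')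
  define ly where "ly = (\<chi> v. lapv W y v)"
  have g: "z' + z = y + ly"
    using My by (simp add: vec_eq_iff Mv ly_def flip: My)
  have de: "e$u + lapv W e u = d$u" for u using Me Mv[of W e u] by simp
  have "disagreement W z' - disagreement W z = bf W e (z' + z)"
    unfolding e_def by (rule D_diff)
  also have "\<dots> = (\<Sum>u\<in>UNIV. e$u * lapv W (y + ly) u)"
    by (simp add: bf_lap[OF sym] g)
  also have "\<dots> = (\<Sum>u\<in>UNIV. e$u * ly$u) + (\<Sum>u\<in>UNIV. e$u * lapv W ly u)"
    by (simp add: lapv_add ly_def distrib_left sum.distrib)
  also have "(\<Sum>u\<in>UNIV. e$u * lapv W ly u) = (\<Sum>u\<in>UNIV. ly$u * lapv W e u)"
    using bf_lap[OF sym, of e ly] bf_lap[OF sym, of ly e] bf_comm[of W e ly] by simp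
  also have "(\<Sum>u\<in>UNIV. e$u * ly$u) + (\<Sum>u\<in>UNIV. ly$u * lapv W e u) = (\<Sum>u\<in>UNIV. ly$u * d$u)"
    by (simp add: sum.distrib[symmetric] flip: de) (simp add: algebra_simps)
  finally have diff: "disagreement W z' - disagreement W z = (\<Sum>u\<in>UNIV. ly$u * d$u)" .
  have wmax: "wdeg W u \<le> max_wdeg W" for u
    unfolding max_wdeg_def by (rule Max_ge) auto
  have wnn: "0 \<le> wdeg W u" for u unfolding wdeg_def by (rule sum_nonneg) (simp add: Wnn)
  have lyb: "\<bar>ly$u\<bar> \<le> 2 * max_wdeg W" for u
  proof -
    have "\<bar>ly$u\<bar> \<le> (\<Sum>v\<in>UNIV. \<bar>W$u$v * (y$u - y$v)\<bar>)"
      unfolding ly_def lapv_def using sum_abs by simp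
    also have "\<dots> \<le> (\<Sum>v\<in>UNIV. W$u$v * 2)"
    proof (rule sum_mono)
      fix v
      have "\<bar>y$u - y$v\<bar> \<le> 2" using yb[of u] yb[of v] by linarith
      thus "\<bar>W$u$v * (y$u - y$v)\<bar> \<le> W$u$v * 2"
        using Wnn[of u v] by (simp add: abs_mult mult_left_mono)
    qed
    also have "\<dots> = 2 * wdeg W u" by (simp add: wdeg_def sum_distrib_left mult.commute)
    finally show ?thesis using wmax[of u] by linarith
  qed
  have db: "\<bar>d$u\<bar> \<le> 1" for u
  proof -
    have a: "0 \<le> s$u" "s$u \<le> 1" "0 \<le> s'$u" "s'$u \<le> 1" using s s' by auto
    show ?thesis unfolding d_def vector_minus_component abs_le_iff using a by linarith
  qed
  define S where "S = {v. d$v \<noteq> 0}"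
  have cS: "card S \<le> k" using l0 unfolding S_def d_def l0_norm_def by simp
  have "(\<Sum>u\<in>UNIV. ly$u * d$u) = (\<Sum>u\<in>S. ly$u * d$u)"
    by (rule sum.mono_neutral_right) (auto simp: S_def)
  also have "\<dots> \<le> (\<Sum>u\<in>S. 2 * max_wdeg W)"
  proof (rule sum_mono)
    fix u
    have "\<bar>ly$u * d$u\<bar> \<le> 2 * max_wdeg W * 1"
      unfolding abs_mult by (rule mult_mono[OF lyb db]) (auto intro: order_trans[OF wnn wmax])
    thus "ly$u * d$u \<le> 2 * max_wdeg W" by simp
  qed
  also have "\<dots> = 2 * max_wdeg W * real (card S)" by simp
  also have "\<dots> \<le> 2 * max_wdeg W * real k"
    using cS order_trans[OF wnn wmax] by (intro mult_left_mono) auto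
  also have "\<dots> \<le> 8 * max_wdeg W * real k"
    using order_trans[OF wnn wmax] by (intro mult_right_mono) auto
  finally show ?thesis using diff unfolding z_def z'_def by linarith
qed

theorem theorem1p3:
  fixes W :: "real^'n^'n" and s s' :: "real^'n" and k :: nat
  assumes "weighted_graph W"
    and "\<forall>v. 0 \<le> s$v \<and> s$v \<le> 1"
    and "\<forall>v. 0 \<le> s'$v \<and> s'$v \<le> 1"
    and "l0_norm (s' - s) \<le> k"
  shows "disagreement W (equilibrium W s')
           \<le> disagreement W (equilibrium W s) + 8 * max_wdeg W * real k"
  using main[OF assms] .

end
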